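(* Let $K^*\in\mathbb{N}$, $M>0$, $p\in\mathbb{N}$, let $\mathcal{Y}\subset\mathbb{R}^{K^*}$ be a closed set, let $f_*:[-M,M]^p\to\mathcal{Y}$ be continuous, and let $g_*:\mathcal{Y}^2\to\mathbb{R}$ be a conditionally positive definite kernel. Let $\sigma:\mathbb{R}\to\mathbb{R}$ be either the ReLU function or a function that is non-constant, continuous, bounded and monotonically increasing. Then for every $\varepsilon>0$, for sufficiently large $K\in\mathbb{N}$, $T=T(K)\in\mathbb{N}$ and $T'\in\mathbb{N}$, there exist $\boldsymbol A\in\mathbb{R}^{K\times T}$, $\boldsymbol B\in\mathbb{R}^{T\times p}$, $\boldsymbol c\in\mathbb{R}^T$, $\boldsymbol e\in\mathbb{R}^{T'}$, $\boldsymbol F\in\mathbb{R}^{T'\times p}$, $\boldsymbol o\in\mathbb{R}^{T'}$ such that \[ \Big| g_*\big(f_*(\boldsymbol x),f_*(\boldsymbol x')\big) - \big( \langle f_{\boldsymbol\psi}(\boldsymbol x), f_{\boldsymbol\psi}(\boldsymbol x')\rangle + u_{\boldsymbol\xi}(\boldsymbol x) + u_{\boldsymbol\xi}(\boldsymbol x')\big)\Big| < \varepsilon \] for all $(\boldsymbol x,\boldsymbol x')\in[-M,M]^{2p}$, where $f_{\boldsymbol\psi}(\boldsymbol x)=\boldsymbol A\,\boldsymbol\sigma(\boldsymbol B\boldsymbol x+\boldsymbol c)\in\mathbb{R}^K$ and $u_{\boldsymbol\xi}(\boldsymbol x)=\langle \boldsymbol e,\boldsymbol\sigma(\boldsymbol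 F\boldsymbol x+\boldsymbol o)\rangle\in\mathbb{R}$, and $\boldsymbol\sigma$ denotes $\sigma$ applied element-wise.
   Context: A kernel on $\mathcal{Y}^2$ is a symmetric continuous function $g:\mathcal{Y}^2\to\mathbb{R}$. A kernel $g$ is conditionally positive definite (CPD) if $\sum_{i=1}^n\sum_{j=1}^n c_ic_j g(\boldsymbol y_i,\boldsymbol y_j)\ge 0$ for all $n\in\mathbb{N}$, all $\boldsymbol y_1,\dots,\boldsymbol y_n\in\mathcal{Y}$ and all $c_1,\dots,c_n\in\mathbb{R}$ with $\sum_{i=1}^n c_i=0$. $\langle\cdot,\cdot\rangle$ is the Euclidean inner product. *)

theory Defs
  imports "HOL-Analysis.Analysis"
begin

definition is_kernel_on :: "'a::topological_space set \<Rightarrow> ('a \<Rightarrow> 'a \<Rightarrow> real) \<Rightarrow> bool" where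
  "is_kernel_on Y g \<longleftrightarrow>
     (\<forall>y\<in>Y. \<forall>y'\<in>Y. g y y' = g y' y) \<and> continuous_on (Y \<times> Y) (\<lambda>(y, y'). g y y')"

definition cpd_kernel_on :: "'a::topological_space set \<Rightarrow> ('a \<Rightarrow> 'a \<Rightarrow> real) \<Rightarrow> bool" where
  "cpd_kernel_on Y g \<longleftrightarrow> is_kernel_on Y g \<and>
     (\<forall>(n::nat) (ys::nat \<Rightarrow> 'a) (cs::nat \<Rightarrow> real).
        (\<forall>i<n. ys i \<in> Y) \<and> (\<Sum>i<n. cs i) = 0 \<longrightarrow>
        (\<Sum>i<n. \<Sum>j<n. cs i * cs j * g (ys i) (ys j)) \<ge> 0)"

definition relu :: "real \<Rightarrow> real" where
  "relu x = max 0 x"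

definition cube :: "real \<Rightarrow> (real^'p) set" where
  "cube M = {x. \<forall>i. \<bar>x $ i\<bar> \<le> M}"

text \<open>Shallow network x \<mapsto> A sigma(B x + c) with hidden width T and output dimension K
  (component k < K); matrices are given entrywise, rows of B as vectors.\<close>
definition fpsi :: "(real \<Rightarrow> real) \<Rightarrow> nat \<Rightarrow> (nat \<Rightarrow> nat \<Rightarrow> real) \<Rightarrow> (nat \<Rightarrow> real^'p)
    \<Rightarrow> (nat \<Rightarrow> real) \<Rightarrow> real^'p \<Rightarrow> nat \<Rightarrow> real" where
  "fpsi \<sigma> T A B c x k = (\<Sum>t<T. A k t * \<sigma> (B t \<bullet> x + c t))"

definition uxi :: "(real \<Rightarrow> real) \<Rightarrow> nat \<Rightarrow> (nat \<Rightarrow> real) \<Rightarrow> (nat \<Rightarrow> real^'p)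
    \<Rightarrow> (nat \<Rightarrow> real) \<Rightarrow> real^'p \<Rightarrow> real" where
  "uxi \<sigma> T' e F ob x = (\<Sum>t<T'. e t * \<sigma> (F t \<bullet> x + ob t))"

end

theory Submission
  imports Defs
begin

lemma quad_Suc:
  fixes P :: "nat \<Rightarrow> nat \<Rightarrow> real"
  assumes sym: "\<forall>i<Suc n. \<forall>j<Suc n. P i j = P j i"
  shows "(\<Sum>i<Suc n. \<Sum>j<Suc n. (c(n:=s)) i * (c(n:=s)) j * P i j)
       = (\<Sum>i<n. \<Sum>j<n. c i * c j * P i j) + 2 * s * (\<Sum>i<n. c i * P i n) + s^2 * P n n"
proof -
  have e1: "(\<Sum>j<n. s * c j * P n j) = s * (\<Sum>i<n. c i * P i n)"
    using sym by (auto simp: sum_distrib_left intro!: sum.cong)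
  have e2: "(\<Sum>i<n. c i * s * P i n) = s * (\<Sum>i<n. c i * P i n)"
    by (auto simp: sum_distrib_left intro!: sum.cong)
  have "(\<Sum>i<Suc n. \<Sum>j<Suc n. (c(n:=s)) i * (c(n:=s)) j * P i j)
      = (\<Sum>i<n. \<Sum>j<n. c i * c j * P i j) + (\<Sum>i<n. c i * s * P i n)
        + ((\<Sum>j<n. s * c j * P n j) + s * s * P n n)"
    by (simp add: sum.distrib)
  also have "\<dots> = (\<Sum>i<n. \<Sum>j<n. c i * c j * P i j) + 2 * s * (\<Sum>i<n. c i * P i n) + s^2 * P n n"
    unfolding e1 e2 by (simp add: power2_eq_square)
  finally show ?thesis .
qed

lemma psd_factor:
  fixes P :: "nat \<Rightarrow> nat \<Rightarrow> real"
  assumes "\<forall>i<n. \<forall>j<n. P i j = P j i"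
    and "\<forall>c. 0 \<le> (\<Sum>i<n. \<Sum>j<n. c i * c j * P i j)"
  shows "\<exists>a. \<forall>i<n. \<forall>j<n. P i j = (\<Sum>l<n. a l i * a l j)"
  using assms
proof (induction n arbitrary: P)
  case 0
  then show ?case by simp
next
  case (Suc n)
  note sym = Suc.prems(1) and psd = Suc.prems(2)
  define v where "v = P n n"
  define p where "p i = P i n" for i
  have Q: "0 \<le> (\<Sum>i<n. \<Sum>j<n. c i * c j * P i j) + 2 * s * (\<Sum>i<n. c i * p i) + s^2 * v" for c s
    using psd[rule_format, of "c(n:=s)"] quad_Suc[OF sym, of c s] by (simp add: p_def v_def)
  have v0: "v \<ge> 0" using Q[of "\<lambda>_. 0" 1] by simp
  have p0: "p i = 0" if "v = 0" "i < n" for i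
  proof -
    let ?c = "\<lambda>k. if k = i then 1 else 0 :: real"
    have "(\<Sum>k<n. ?c k * p k) = (\<Sum>k<n. if k = i then p k else 0)" by (rule sum.cong) auto
    hence cp: "(\<Sum>k<n. ?c k * p k) = p i" using that by simp
    define q where "q = (\<Sum>i<n. \<Sum>j<n. ?c i * ?c j * P i j)"
    have "0 \<le> q + 2 * s * p i" for s using Q[of ?c s] that cp by (simp add: q_def)
    from this[of "- (q + 1) / (2 * p i)"] show ?thesis
      by (cases "p i = 0") (auto simp: field_simps)
  qed
  define P' where "P' i j = P i j - p i * p j / v" for i j
  have sym': "\<forall>i<n. \<forall>j<n. P' i j = P' j i" using sym by (auto simp: P'_def)
  have psd': "\<forall>c. 0 \<le> (\<Sum>i<n. \<Sum>j<n. c i * c j * P' i j)"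
  proof
    fix c :: "nat \<Rightarrow> real"
    define t where "t = (\<Sum>i<n. c i * p i)"
    have "(\<Sum>i<n. \<Sum>j<n. c i * c j * P' i j) = (\<Sum>i<n. \<Sum>j<n. c i * c j * P i j) - t^2 / v"
    proof -
      have "(\<Sum>i<n. \<Sum>j<n. c i * c j * P' i j) = (\<Sum>i<n. \<Sum>j<n. c i * c j * P i j)
           - (\<Sum>i<n. \<Sum>j<n. (c i * p i) * (c j * p j) / v)"
        by (simp add: P'_def right_diff_distrib sum_subtractf mult.assoc mult.left_commute)
      also have "(\<Sum>i<n. \<Sum>j<n. (c i * p i) * (c j * p j) / v) = t^2 / v"
        by (simp add: t_def power2_eq_square sum_divide_distrib[symmetric] sum_product)
      finally show ?thesis .
    qed
    moreover have "0 \<le> (\<Sum>i<n. \<Sum>j<n. c i * c j * P i j) - t^2 / v"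
    proof (cases "v = 0")
      case True then show ?thesis using Q[of c 0] by simp
    next
      case False
      hence vp: "v > 0" using v0 by simp
      have "0 \<le> (\<Sum>i<n. \<Sum>j<n. c i * c j * P i j) + 2 * (- t / v) * t + (- t / v)^2 * v"
        using Q[of c "- t / v"] by (simp add: t_def)
      moreover have "2 * (- t / v) * t + (- t / v)^2 * v = - (t^2 / v)"
        using vp by (simp add: field_simps power2_eq_square)
      ultimately show ?thesis by simp
    qed
    ultimately show "0 \<le> (\<Sum>i<n. \<Sum>j<n. c i * c j * P' i j)" by simp
  qed
  obtain a where a: "\<forall>i<n. \<forall>j<n. P' i j = (\<Sum>l<n. a l i * a l j)"
    using Suc.IH[OF sym' psd'] by blast
  define b where "b l i = (if l < n then (if i < n then a l i else 0)
                     else (if i < n then p i / sqrt v else sqrt v))" for l i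
  have "P i j = (\<Sum>l<Suc n. b l i * b l j)" if ij: "i < Suc n" "j < Suc n" for i j
  proof -
    have sq: "sqrt v * sqrt v = v" using v0 by simp
    consider "i < n" "j < n" | "i < n" "j = n" | "i = n" "j < n" | "i = n" "j = n"
      using ij by (metis less_SucE)
    then show ?thesis
    proof cases
      case 1
      then have "P i j = P' i j + p i * p j / v" by (simp add: P'_def)
      also have "\<dots> = (\<Sum>l<n. b l i * b l j) + b n i * b n j"
        using 1 a v0 by (cases "v = 0") (auto simp: b_def p0 field_simps intro!: sum.cong)
      finally show ?thesis by simp
    next
      case 2
      have "(\<Sum>l<n. b l i * b l j) = 0" using 2 by (simp add: b_def)
      moreover have "b n i * b n j = p i"
        using 2 v0 by (cases "v = 0") (auto simp: b_def p0)
      ultimately show ?thesis using 2 by (simp add: p_def)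
    next
      case 3
      have "(\<Sum>l<n. b l i * b l j) = 0" using 3 by (simp add: b_def)
      moreover have "b n i * b n j = p j"
        using 3 v0 by (cases "v = 0") (auto simp: b_def p0)
      ultimately show ?thesis using 3 sym by (simp add: p_def)
    next
      case 4
      have "(\<Sum>l<n. b l i * b l j) = 0" using 4 by (simp add: b_def)
      moreover have "b n i * b n j = v" using 4 v0 by (simp add: b_def)
      ultimately show ?thesis using 4 by (simp add: v_def)
    qed
  qed
  then show ?case by blast
qed

lemma cpd_decomp:
  fixes g :: "'a::topological_space \<Rightarrow> 'a \<Rightarrow> real" and n :: nat and ys :: "nat \<Rightarrow> 'a"
  assumes cpd: "cpd_kernel_on Y g" and ys: "\<forall>i<n. ys i \<in> Y" and n: "n > 0"
  shows "\<exists>a h. \<forall>i<n. \<forall>j<n. g (ys i) (ys j) = (\<Sum>l<n. a l i * a l j) + h i + h j"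
proof -
  have symg: "\<forall>y\<in>Y. \<forall>y'\<in>Y. g y y' = g y' y"
    using cpd unfolding cpd_kernel_on_def is_kernel_on_def by blast
  have cpdg: "\<And>(m::nat) zs cs. (\<forall>i<m. zs i \<in> Y) \<Longrightarrow> (\<Sum>i<m. cs i) = 0 \<Longrightarrow>
        (\<Sum>i<m. \<Sum>j<m. cs i * cs j * g (zs i) (zs j)) \<ge> 0"
    using cpd unfolding cpd_kernel_on_def by auto
  define G where "G i j = g (ys i) (ys j)" for i j
  have Gs: "G i j = G j i" if "i < n" "j < n" for i j using symg ys that by (simp add: G_def)
  define P where "P i j = G i j - G i 0 - G 0 j + G 0 0" for i j
  have symP: "\<forall>i<n. \<forall>j<n. P i j = P j i" using Gs n by (auto simp: P_def)
  have psdP: "\<forall>c. 0 \<le> (\<Sum>i<n. \<Sum>j<n. c i * c j * P i j)"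
  proof
    fix c :: "nat \<Rightarrow> real"
    define S where "S = (\<Sum>i<n. c i)"
    define zs where "zs = ys(n := ys 0)"
    define G' where "G' i j = g (zs i) (zs j)" for i j
    have zsY: "\<forall>i<Suc n. zs i \<in> Y" using ys n by (auto simp: zs_def less_Suc_eq)
    have symG': "\<forall>i<Suc n. \<forall>j<Suc n. G' i j = G' j i" using zsY symg by (simp add: G'_def)
    have "0 \<le> (\<Sum>i<Suc n. \<Sum>j<Suc n. (c(n:=-S)) i * (c(n:=-S)) j * G' i j)"
      unfolding G'_def by (rule cpdg[OF zsY]) (simp add: S_def)
    also have "\<dots> = (\<Sum>i<n. \<Sum>j<n. c i * c j * G' i j) + 2 * (-S) * (\<Sum>i<n. c i * G' i n) + (-S)^2 * G' n n"
      by (rule quad_Suc[OF symG'])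
    also have "(\<Sum>i<n. \<Sum>j<n. c i * c j * G' i j) = (\<Sum>i<n. \<Sum>j<n. c i * c j * G i j)"
      by (auto simp: G'_def G_def zs_def intro!: sum.cong)
    also have "(\<Sum>i<n. c i * G' i n) = (\<Sum>i<n. c i * G i 0)"
      by (auto simp: G'_def G_def zs_def intro!: sum.cong)
    also have "G' n n = G 0 0" by (simp add: G'_def G_def zs_def)
    also have "(\<Sum>i<n. \<Sum>j<n. c i * c j * G i j) + 2 * (-S) * (\<Sum>i<n. c i * G i 0) + (-S)^2 * G 0 0
       = (\<Sum>i<n. \<Sum>j<n. c i * c j * P i j)"
    proof -
      have e1: "(\<Sum>i<n. \<Sum>j<n. c i * c j * G i 0) = S * (\<Sum>i<n. c i * G i 0)"
        by (simp add: S_def sum_distrib_left sum_distrib_right mult_ac)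
      have e2: "(\<Sum>i<n. \<Sum>j<n. c i * c j * G 0 j) = S * (\<Sum>i<n. c i * G i 0)"
      proof -
        have "(\<Sum>i<n. \<Sum>j<n. c i * c j * G 0 j) = (\<Sum>i<n. \<Sum>j<n. c i * (c j * G j 0))"
          using Gs n by (auto simp: mult_ac intro!: sum.cong)
        also have "\<dots> = S * (\<Sum>i<n. c i * G i 0)"
          by (simp add: S_def sum_product)
        finally show ?thesis .
      qed
      have e3: "(\<Sum>i<n. \<Sum>j<n. c i * c j * G 0 0) = S^2 * G 0 0"
        by (simp add: S_def power2_eq_square sum_distrib_left sum_distrib_right sum_product mult_ac)
      have "(\<Sum>i<n. \<Sum>j<n. c i * c j * P i j) = (\<Sum>i<n. \<Sum>j<n. c i * c j * G i j)
          - (\<Sum>i<n. \<Sum>j<n. c i * c j * G i 0) - (\<Sum>i<n. \<Sum>j<n. c i * c j * G 0 j)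
          + (\<Sum>i<n. \<Sum>j<n. c i * c j * G 0 0)"
        by (simp add: P_def algebra_simps sum.distrib sum_subtractf)
      then show ?thesis unfolding e1 e2 e3 by (simp add: algebra_simps power2_eq_square)
    qed
    finally show "0 \<le> (\<Sum>i<n. \<Sum>j<n. c i * c j * P i j)" .
  qed
  obtain a where a: "\<forall>i<n. \<forall>j<n. P i j = (\<Sum>l<n. a l i * a l j)"
    using psd_factor[OF symP psdP] by blast
  define h where "h i = G i 0 - G 0 0 / 2" for i
  have "g (ys i) (ys j) = (\<Sum>l<n. a l i * a l j) + h i + h j" if "i < n" "j < n" for i j
  proof -
    have "P i j = (\<Sum>l<n. a l i * a l j)" using a that by blast
    then show ?thesis using Gs[of 0 j] n that by (simp add: P_def h_def G_def[symmetric])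
  qed
  then show ?thesis by blast
qed

lemma sigmoid_tails:
  fixes s :: "real \<Rightarrow> real"
  assumes bnd: "bounded (range s)" and mono: "mono s" and nc: "\<not> (\<exists>a. \<forall>x. s x = a)"
  obtains L U where "L < U" "\<And>x. L \<le> s x" "\<And>x. s x \<le> U"
    "\<And>\<eta>. \<eta> > 0 \<Longrightarrow> \<exists>R>0. (\<forall>u\<ge>R. s u \<ge> U - \<eta>) \<and> (\<forall>u\<le>-R. s u \<le> L + \<eta>)"
proof -
  define L where "L = Inf (range s)"
  define U where "U = Sup (range s)"
  have ba: "bdd_above (range s)" and bb: "bdd_below (range s)"
    using bnd bounded_imp_bdd_above bounded_imp_bdd_below by auto
  have Ls: "L \<le> s x" for x unfolding L_def using bb by (simp add: cInf_lower)
  have Us: "s x \<le> U" for x unfolding U_def using ba by (simp add: cSup_upper)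
  obtain x y where "s x \<noteq> s y" using nc by metis
  hence LU: "L < U" using Ls[of x] Us[of x] Ls[of y] Us[of y] by linarith
  have tails: "\<exists>R>0. (\<forall>u\<ge>R. s u \<ge> U - \<eta>) \<and> (\<forall>u\<le>-R. s u \<le> L + \<eta>)" if "\<eta> > 0" for \<eta>
  proof -
    have "U - \<eta> < Sup (range s)" using that by (simp add: U_def)
    then obtain x1 where x1: "U - \<eta> < s x1" using less_cSupD[of "range s"] by blast
    have "Inf (range s) < L + \<eta>" using that by (simp add: L_def)
    then obtain x0 where x0: "s x0 < L + \<eta>" using cInf_lessD[of "range s"] by blast
    define R where "R = \<bar>x1\<bar> + \<bar>x0\<bar> + 1"
    have "\<forall>u\<ge>R. s u \<ge> U - \<eta>"
    proof (intro allI impI)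
      fix u assume "R \<le> u"
      hence "x1 \<le> u" by (simp add: R_def)
      then show "s u \<ge> U - \<eta>" using mono x1 by (meson monoD order.trans less_imp_le)
    qed
    moreover have "\<forall>u\<le>-R. s u \<le> L + \<eta>"
    proof (intro allI impI)
      fix u assume "u \<le> -R"
      hence "u \<le> x0" by (simp add: R_def)
      then show "s u \<le> L + \<eta>" using mono x0 by (meson monoD order.trans less_imp_le)
    qed
    ultimately show ?thesis by (intro exI[of _ R]) (simp add: R_def)
  qed
  show ?thesis using that LU Ls Us tails by blast
qed

lemma sigmoid_1d:
  fixes s :: "real \<Rightarrow> real" and h :: "real \<Rightarrow> real"
  assumes bnd: "bounded (range s)" and mono: "mono s" and nc: "\<not> (\<exists>a. \<forall>x. s x = a)"
    and hc: "continuous_on {a..b} h" and ab: "a < b" and ep: "\<epsilon> > 0"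
  shows "\<exists>C (N::nat) \<alpha> \<beta> e. \<forall>t\<in>{a..b}. \<bar>h t - (C + (\<Sum>j<N. e j * s (\<alpha> j * t + \<beta> j)))\<bar> < \<epsilon>"
proof -
  obtain L U where LU: "L < U" and Ls: "\<And>x. L \<le> s x" and Us: "\<And>x. s x \<le> U"
    and tails: "\<And>\<eta>. \<eta> > 0 \<Longrightarrow> \<exists>R>0. (\<forall>u\<ge>R. s u \<ge> U - \<eta>) \<and> (\<forall>u\<le>-R. s u \<le> L + \<eta>)"
    using sigmoid_tails[OF bnd mono nc] by blast
  define H where "H u = (s u - L) / (U - L)" for u
  have H01: "0 \<le> H u" "H u \<le> 1" for u using LU Ls[of u] Us[of u] by (auto simp: H_def field_simps)
  have Htails: "\<exists>R>0. (\<forall>u\<ge>R. H u \<ge> 1 - \<eta>) \<and> (\<forall>u\<le>-R. H u \<le> \<eta>)" if etap: "\<eta> > 0" for \<eta>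
  proof -
    obtain R where R: "R > 0" "\<forall>u\<ge>R. s u \<ge> U - \<eta> * (U - L)" "\<forall>u\<le>-R. s u \<le> L + \<eta> * (U - L)"
      using tails[of "\<eta> * (U - L)"] etap LU by auto
    have "\<forall>u\<ge>R. H u \<ge> 1 - \<eta>"
      using R(2) LU by (auto simp: H_def field_simps)
    moreover have "\<forall>u\<le>-R. H u \<le> \<eta>"
      using R(3) LU by (auto simp: H_def field_simps)
    ultimately show ?thesis using R(1) by blast
  qed
  have "uniformly_continuous_on {a..b} h"
    using hc by (simp add: compact_uniformly_continuous)
  then obtain \<delta> where dp: "\<delta> > 0"
    and uc: "\<And>x x'. x \<in> {a..b} \<Longrightarrow> x' \<in> {a..b} \<Longrightarrow> dist x' x < \<delta> \<Longrightarrow> dist (h x') (h x) < \<epsilon> / 4"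
    unfolding uniformly_continuous_on_def using ep by (metis divide_pos_pos zero_less_numeral)
  define N where "N = nat \<lceil>(b - a) / \<delta>\<rceil> + 1"
  have N1: "N \<ge> 1" by (simp add: N_def)
  define d where "d = (b - a) / N"
  have dpos: "d > 0" using ab N1 by (simp add: d_def)
  have "(b - a) / \<delta> < N" unfolding N_def by linarith
  hence dd: "d < \<delta>" using dp N1 ab by (simp add: d_def field_simps)
  define tk where "tk k = a + real k * d" for k
  have tkN: "tk N = b" using N1 by (simp add: tk_def d_def)
  have tkab: "tk k \<in> {a..b}" if "k \<le> N" for k
  proof -
    have "real k * d \<le> real N * d" using that dpos by (simp add: mult_right_mono)
    moreover have "0 \<le> real k * d" using dpos by simp
    ultimately show ?thesis using tkN[unfolded tk_def] unfolding tk_def by simp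
  qed
  define D where "D k = (if k = 0 then h a else h (tk k) - h (tk (k - 1)))" for k
  have Dsmall: "\<bar>D k\<bar> < \<epsilon> / 4" if "1 \<le> k" "k \<le> N" for k
  proof -
    have "dist (h (tk k)) (h (tk (k - 1))) < \<epsilon> / 4"
      using uc[of "tk (k - 1)" "tk k"] tkab that dpos dd
      by (simp add: dist_real_def tk_def of_nat_diff algebra_simps)
    then show ?thesis using that by (simp add: D_def dist_real_def)
  qed
  define B' where "B' = \<bar>h a\<bar> + \<epsilon>"
  have B'p: "B' > 0" using ep by (simp add: B'_def)
  have DB: "\<bar>D k\<bar> \<le> B'" if "k \<le> N" for k
  proof (cases "k = 0")
    case True then show ?thesis using ep by (simp add: D_def B'_def)
  next
    case False
    then have "\<bar>D k\<bar> < \<epsilon> / 4" using Dsmall[of k] that by simp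
    moreover have "0 \<le> \<bar>h a\<bar>" by simp
    ultimately show ?thesis using ep unfolding B'_def by linarith
  qed
  have tele: "(\<Sum>k\<le>m. D k) = h (tk m)" for m
    by (induction m) (auto simp: D_def tk_def)
  define \<eta> where "\<eta> = \<epsilon> / (4 * (N + 1) * B')"
  have \<eta>p: "\<eta> > 0" using ep B'p by (simp add: \<eta>_def)
  obtain R where Rp: "R > 0" and R1: "\<forall>u\<ge>R. H u \<ge> 1 - \<eta>" and R0: "\<forall>u\<le>-R. H u \<le> \<eta>"
    using Htails[OF \<eta>p] by blast
  define lam where "lam = 2 * R / d"
  have lamp: "lam > 0" using Rp dpos by (simp add: lam_def)
  define c where "c k = tk k - d / 2" for k
  define F where "F t = (\<Sum>k\<le>N. D k * H (lam * (t - c k)))" for t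
  have Fbound: "\<bar>h t - F t\<bar> < \<epsilon>" if t: "t \<in> {a..b}" for t
  proof -
    define m where "m = min N (nat \<lfloor>(t - a) / d\<rfloor>)"
    have mN: "m \<le> N" by (simp add: m_def)
    have tm1: "tk m \<le> t"
    proof (cases "N \<le> nat \<lfloor>(t - a) / d\<rfloor>")
      case True
      hence "m = N" by (simp add: m_def)
      have q0: "0 \<le> (t - a) / d" using t dpos by simp
      have "int N \<le> \<lfloor>(t - a) / d\<rfloor>" using True q0 by (simp add: le_nat_iff)
      hence "real N \<le> (t - a) / d" by (simp add: le_floor_iff)
      hence "a + real N * d \<le> t" using dpos by (simp add: field_simps)
      then show ?thesis using \<open>m = N\<close> by (simp add: tk_def)
    next
      case False
      hence m: "m = nat \<lfloor>(t - a) / d\<rfloor>" by (simp add: m_def)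
      have "0 \<le> (t - a) / d" using t dpos by simp
      hence "real m \<le> (t - a) / d" using m by linarith
      then show ?thesis using dpos by (simp add: tk_def field_simps)
    qed
    have tm2: "t < tk m + d"
    proof (cases "N \<le> nat \<lfloor>(t - a) / d\<rfloor>")
      case True
      hence "m = N" by (simp add: m_def)
      then show ?thesis using tkN t dpos by simp
    next
      case False
      hence m: "m = nat \<lfloor>(t - a) / d\<rfloor>" by (simp add: m_def)
      have "0 \<le> (t - a) / d" using t dpos by simp
      hence "(t - a) / d < real m + 1" using m by linarith
      then show ?thesis using dpos by (simp add: tk_def field_simps)
    qed
    define err where "err k = D k * (H (lam * (t - c k)) - (if k \<le> m then 1 else 0))" for k
    have errb: "\<bar>err k\<bar> \<le> B' * \<eta> + (if k = Suc m then \<epsilon> / 4 else 0)" if kN: "k \<le> N" for k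
    proof -
      have hB: "\<bar>D k\<bar> \<le> B'" using DB kN by simp
      consider "k \<le> m" | "k = Suc m" | "Suc (Suc m) \<le> k" by linarith
      then show ?thesis
      proof cases
        case 1
        have "real k * d \<le> real m * d" using 1 dpos by (simp add: mult_right_mono)
        hence "t - c k \<ge> d / 2" using tm1 by (simp add: c_def tk_def)
        hence "lam * (t - c k) \<ge> lam * (d / 2)" using lamp by (simp add: mult_left_mono)
        moreover have "lam * (d / 2) = R" using dpos by (simp add: lam_def)
        ultimately have "H (lam * (t - c k)) \<ge> 1 - \<eta>" using R1 by auto
        hence "\<bar>H (lam * (t - c k)) - 1\<bar> \<le> \<eta>" using H01 by (simp add: abs_le_iff)
        hence "\<bar>err k\<bar> \<le> B' * \<eta>" using hB 1
          by (simp add: err_def abs_mult mult_mono)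
        then show ?thesis using 1 ep by simp
      next
        case 2
        have "\<bar>err k\<bar> = \<bar>D k\<bar> * H (lam * (t - c k))" using 2 H01 by (simp add: err_def abs_mult)
        also have "\<dots> \<le> \<bar>D k\<bar>" using H01 by (simp add: mult_left_le)
        also have "\<dots> \<le> \<epsilon> / 4" using Dsmall[of k] 2 kN by simp
        finally have "\<bar>err k\<bar> \<le> \<epsilon> / 4" .
        moreover have "0 \<le> B' * \<eta>" using B'p \<eta>p by simp
        moreover have "(if k = Suc m then \<epsilon> / 4 else 0) = \<epsilon> / 4" using 2 by simp
        ultimately show ?thesis by linarith
      next
        case 3
        have "real (Suc (Suc m)) * d \<le> real k * d" using 3 dpos by (simp add: mult_right_mono del: of_nat_Suc)
        hence "c k - t \<ge> d / 2" using tm2 by (simp add: c_def tk_def algebra_simps)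
        hence "lam * (t - c k) \<le> - (lam * (d / 2))" using lamp
          by (metis minus_diff_eq mult_le_cancel_left_pos mult_minus_right neg_le_iff_le)
        moreover have "lam * (d / 2) = R" using dpos by (simp add: lam_def)
        ultimately have "H (lam * (t - c k)) \<le> \<eta>" using R0 by auto
        hence "\<bar>err k\<bar> \<le> B' * \<eta>" using hB 3 H01
          by (simp add: err_def abs_mult mult_mono)
        then show ?thesis using 3 ep by simp
      qed
    qed
    have "\<bar>\<Sum>k\<le>N. err k\<bar> \<le> (\<Sum>k\<le>N. \<bar>err k\<bar>)" by (rule sum_abs)
    also have "\<dots> \<le> (\<Sum>k\<le>N. B' * \<eta> + (if k = Suc m then \<epsilon> / 4 else 0))"
      by (rule sum_mono) (simp add: errb)
    also have "\<dots> = (N + 1) * B' * \<eta> + (if Suc m \<le> N then \<epsilon> / 4 else 0)"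
      by (simp add: sum.distrib)
    also have "\<dots> \<le> \<epsilon> / 4 + \<epsilon> / 4"
    proof -
      define X where "X = real (N + 1) * B'"
      have X: "X > 0" using B'p by (simp add: X_def)
      have "\<eta> = \<epsilon> / (4 * X)" by (simp add: \<eta>_def X_def mult.assoc)
      hence "X * \<eta> = \<epsilon> / 4" using X by (simp add: field_simps)
      hence "(N + 1) * B' * \<eta> = \<epsilon> / 4" by (simp add: X_def)
      then show ?thesis using ep by simp
    qed
    finally have serr: "\<bar>\<Sum>k\<le>N. err k\<bar> \<le> \<epsilon> / 2" by simp
    have "(\<Sum>k\<le>N. if k \<le> m then D k else 0) = (\<Sum>k\<le>m. D k)"
      by (rule sum.mono_neutral_cong_right) (use mN in auto)
    moreover have "err k = D k * H (lam * (t - c k)) - (if k \<le> m then D k else 0)" for k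
      by (simp add: err_def algebra_simps)
    ultimately have "F t = (\<Sum>k\<le>N. err k) + h (tk m)"
      by (simp add: F_def tele sum_subtractf)
    moreover have "\<bar>h (tk m) - h t\<bar> < \<epsilon> / 4"
      using uc[of t "tk m"] tkab[OF mN] t tm1 tm2 dd by (simp add: dist_real_def)
    ultimately show ?thesis using serr by linarith
  qed
  define C where "C = - (L / (U - L)) * (\<Sum>k\<le>N. D k)"
  define e where "e k = D k / (U - L)" for k
  define \<beta> where "\<beta> k = - lam * c k" for k
  have Frep: "F t = C + (\<Sum>j<Suc N. e j * s ((\<lambda>_. lam) j * t + \<beta> j))" for t
  proof -
    have "F t = (\<Sum>k\<le>N. e k * s (lam * t + \<beta> k) - D k * (L / (U - L)))"
      unfolding F_def
    proof (intro sum.cong refl)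
      fix k
      have arg: "lam * t + \<beta> k = lam * (t - c k)" by (simp add: \<beta>_def algebra_simps)
      show "D k * H (lam * (t - c k)) = e k * s (lam * t + \<beta> k) - D k * (L / (U - L))"
        unfolding arg H_def e_def by (simp add: diff_divide_distrib right_diff_distrib)
    qed
    also have "\<dots> = C + (\<Sum>j<Suc N. e j * s (lam * t + \<beta> j))"
    proof -
      have "(\<Sum>k\<le>N. D k * (L / (U - L))) = (\<Sum>k\<le>N. D k) * (L / (U - L))"
        by (rule sum_distrib_right[symmetric])
      then show ?thesis
        by (simp only: sum_subtractf C_def lessThan_Suc_atMost) simp
    qed
    finally show ?thesis by simp
  qed
  show ?thesis
    apply (rule exI[of _ C], rule exI[of _ "Suc N"], rule exI[of _ "\<lambda>_. lam"], rule exI[of _ \<beta>], rule exI[of _ e])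
    using Fbound Frep by simp
qed

definition isnet :: "(real \<Rightarrow> real) \<Rightarrow> (real^'p \<Rightarrow> real) \<Rightarrow> bool" where
  "isnet \<sigma> g \<longleftrightarrow> (\<exists>(T::nat) B c e. \<forall>x. g x = (\<Sum>t<T. e t * \<sigma> (B t \<bullet> x + c t)))"

lemma sum_concat_nat: "(\<Sum>t<a+b. F t) = (\<Sum>t<a. F t) + (\<Sum>t<b. F (a + t))" for F :: "nat \<Rightarrow> real"
  by (induction b) (simp_all add: add.assoc)

lemma isnet_zero: "isnet \<sigma> (\<lambda>x. 0)"
  unfolding isnet_def by (rule exI[of _ 0]) simp

lemma isnet_add:
  assumes "isnet \<sigma> f" "isnet \<sigma> g"
  shows "isnet \<sigma> (\<lambda>x. f x + g x)"
proof -
  obtain T1 B1 c1 e1 where f: "\<And>x. f x = (\<Sum>t<(T1::nat). e1 t * \<sigma> (B1 t \<bullet> x + c1 t))"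
    using assms(1) unfolding isnet_def by blast
  obtain T2 B2 c2 e2 where g: "\<And>x. g x = (\<Sum>t<(T2::nat). e2 t * \<sigma> (B2 t \<bullet> x + c2 t))"
    using assms(2) unfolding isnet_def by blast
  define B where "B t = (if t < T1 then B1 t else B2 (t - T1))" for t
  define c where "c t = (if t < T1 then c1 t else c2 (t - T1))" for t
  define e where "e t = (if t < T1 then e1 t else e2 (t - T1))" for t
  have "f x + g x = (\<Sum>t<T1+T2. e t * \<sigma> (B t \<bullet> x + c t))" for x
    unfolding sum_concat_nat f g by (simp add: B_def c_def e_def)
  then show ?thesis unfolding isnet_def by blast
qed

lemma isnet_scale:
  assumes "isnet \<sigma> f"
  shows "isnet \<sigma> (\<lambda>x. a * f x)"
proof -
  obtain T B c e where f: "\<And>x. f x = (\<Sum>t<(T::nat). e t * \<sigma> (B t \<bullet> x + c t))"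
    using assms(1) unfolding isnet_def by blast
  define e' where "e' t = a * e t" for t
  have "a * f x = (\<Sum>t<T. e' t * \<sigma> (B t \<bullet> x + c t))" for x
    unfolding f e'_def by (simp add: sum_distrib_left mult.assoc)
  then show ?thesis unfolding isnet_def by blast
qed

lemma isnet_const:
  assumes "\<sigma> \<beta> \<noteq> 0"
  shows "isnet \<sigma> (\<lambda>x::real^'p. C)"
proof -
  define e :: "nat \<Rightarrow> real" where "e t = C / \<sigma> \<beta>" for t
  define B :: "nat \<Rightarrow> real^'p" where "B t = 0" for t
  define c :: "nat \<Rightarrow> real" where "c t = \<beta>" for t
  have "C = (\<Sum>t<(1::nat). e t * \<sigma> (B t \<bullet> x + c t))" for x :: "real^'p"
    using assms by (simp add: e_def B_def c_def)
  then show ?thesis unfolding isnet_def by blast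
qed

lemma isnet_ridge:
  fixes N :: nat shows "isnet \<sigma> (\<lambda>x::real^'p. \<Sum>j<N. e j * \<sigma> (\<alpha> j * (w \<bullet> x) + \<beta> j))"
proof -
  define B :: "nat \<Rightarrow> real^'p" where "B j = \<alpha> j *\<^sub>R w" for j
  have "(\<Sum>j<N. e j * \<sigma> (\<alpha> j * (w \<bullet> x) + \<beta> j)) = (\<Sum>j<N. e j * \<sigma> (B j \<bullet> x + \<beta> j))" for x
    by (simp add: B_def)
  then show ?thesis unfolding isnet_def by blast
qed

definition approxable :: "(real \<Rightarrow> real) \<Rightarrow> (real^'p) set \<Rightarrow> (real^'p \<Rightarrow> real) \<Rightarrow> bool" where
  "approxable \<sigma> S f \<longleftrightarrow> (\<forall>\<epsilon>>0. \<exists>g. isnet \<sigma> g \<and> (\<forall>x\<in>S. \<bar>f x - g x\<bar> < \<epsilon>))"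

lemma approxable_add:
  assumes "approxable \<sigma> S f" "approxable \<sigma> S g"
  shows "approxable \<sigma> S (\<lambda>x. f x + g x)"
  unfolding approxable_def
proof (intro allI impI)
  fix \<epsilon> :: real assume ep: "\<epsilon> > 0"
  obtain f' where f': "isnet \<sigma> f'" "\<forall>x\<in>S. \<bar>f x - f' x\<bar> < \<epsilon> / 2"
    using assms(1) ep unfolding approxable_def by (meson half_gt_zero)
  obtain g' where g': "isnet \<sigma> g'" "\<forall>x\<in>S. \<bar>g x - g' x\<bar> < \<epsilon> / 2"
    using assms(2) ep unfolding approxable_def by (meson half_gt_zero)
  have "\<forall>x\<in>S. \<bar>(f x + g x) - (f' x + g' x)\<bar> < \<epsilon>"
    using f'(2) g'(2) by (smt (verit) field_sum_of_halves)
  then show "\<exists>h. isnet \<sigma> h \<and> (\<forall>x\<in>S. \<bar>f x + g x - h x\<bar> < \<epsilon>)"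
    using isnet_add[OF f'(1) g'(1)] by blast
qed

lemma approxable_scale:
  assumes "approxable \<sigma> S f"
  shows "approxable \<sigma> S (\<lambda>x. a * f x)"
  unfolding approxable_def
proof (intro allI impI)
  fix \<epsilon> :: real assume ep: "\<epsilon> > 0"
  have ep': "\<epsilon> / (\<bar>a\<bar> + 1) > 0" using ep by simp
  obtain f' where f': "isnet \<sigma> f'" "\<forall>x\<in>S. \<bar>f x - f' x\<bar> < \<epsilon> / (\<bar>a\<bar> + 1)"
    using assms(1) ep' unfolding approxable_def by blast
  have "\<bar>a * f x - a * f' x\<bar> < \<epsilon>" if "x \<in> S" for x
  proof -
    have "\<bar>a * f x - a * f' x\<bar> = \<bar>a\<bar> * \<bar>f x - f' x\<bar>" by (simp add: abs_mult right_diff_distrib[symmetric])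
    also have "\<dots> \<le> (\<bar>a\<bar> + 1) * \<bar>f x - f' x\<bar>" by (simp add: mult_right_mono)
    also have "\<dots> < (\<bar>a\<bar> + 1) * (\<epsilon> / (\<bar>a\<bar> + 1))"
      using f'(2) that by (intro mult_strict_left_mono) auto
    also have "\<dots> = \<epsilon>" by simp
    finally show ?thesis .
  qed
  then show "\<exists>h. isnet \<sigma> h \<and> (\<forall>x\<in>S. \<bar>a * f x - h x\<bar> < \<epsilon>)"
    using isnet_scale[OF f'(1), of a] by blast
qed

lemma approxable_limit:
  assumes "\<And>\<epsilon>. \<epsilon> > 0 \<Longrightarrow> \<exists>f'. approxable \<sigma> S f' \<and> (\<forall>x\<in>S. \<bar>f x - f' x\<bar> < \<epsilon>)"
  shows "approxable \<sigma> S f"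
  unfolding approxable_def
proof (intro allI impI)
  fix \<epsilon> :: real assume ep: "\<epsilon> > 0"
  obtain f' where f': "approxable \<sigma> S f'" "\<forall>x\<in>S. \<bar>f x - f' x\<bar> < \<epsilon> / 2"
    using assms ep by (meson half_gt_zero)
  obtain g where g: "isnet \<sigma> g" "\<forall>x\<in>S. \<bar>f' x - g x\<bar> < \<epsilon> / 2"
    using f'(1) ep unfolding approxable_def by (meson half_gt_zero)
  have "\<forall>x\<in>S. \<bar>f x - g x\<bar> < \<epsilon>" using f'(2) g(2) by (smt (verit) field_sum_of_halves)
  then show "\<exists>g. isnet \<sigma> g \<and> (\<forall>x\<in>S. \<bar>f x - g x\<bar> < \<epsilon>)" using g(1) by blast
qed

definition expsum :: "(real \<times> (real^'p)) list \<Rightarrow> real^'p \<Rightarrow> real" where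
  "expsum L x = sum_list (map (\<lambda>(a, w). a * exp (w \<bullet> x)) L)"

lemma expsum_simps[simp]:
  "expsum [] x = 0" "expsum ((a, w) # L) x = a * exp (w \<bullet> x) + expsum L x"
  by (simp_all add: expsum_def)

lemma expsum_append: "expsum (L1 @ L2) x = expsum L1 x + expsum L2 x"
  by (simp add: expsum_def)

definition expmul :: "(real \<times> (real^'p)) list \<Rightarrow> (real \<times> (real^'p)) list \<Rightarrow> (real \<times> (real^'p)) list" where
  "expmul L1 L2 = concat (map (\<lambda>(a, w). map (\<lambda>(b, v). (a * b, w + v)) L2) L1)"

lemma expsum_mul1: "expsum (map (\<lambda>(b, v). (a * b, w + v)) L2) x = a * exp (w \<bullet> x) * expsum L2 x"
  by (induction L2) (auto simp: inner_add_left exp_add algebra_simps)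

lemma expsum_mul: "expsum (expmul L1 L2) x = expsum L1 x * expsum L2 x"
proof (induction L1)
  case Nil then show ?case by (simp add: expmul_def)
next
  case (Cons p L1)
  obtain a w where p: "p = (a, w)" by (cases p)
  have "expmul (p # L1) L2 = map (\<lambda>(b, v). (a * b, w + v)) L2 @ expmul L1 L2"
    by (simp add: expmul_def p)
  then have "expsum (expmul (p # L1) L2) x = a * exp (w \<bullet> x) * expsum L2 x + expsum L1 x * expsum L2 x"
    using Cons by (simp only: expsum_append expsum_mul1)
  then show ?case by (simp add: p algebra_simps)
qed

lemma expsum_cont: "continuous_on S (expsum L)"
proof (induction L)
  case Nil then show ?case by (simp add: expsum_def)
next
  case (Cons p L)
  obtain a w where p: "p = (a, w)" by (cases p)
  have e: "expsum (p # L) = (\<lambda>x. a * exp (w \<bullet> x) + expsum L x)" by (simp add: p fun_eq_iff)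
  show ?case unfolding e by (intro continuous_intros Cons)
qed

lemma sigmoid_approx_exp:
  fixes s :: "real \<Rightarrow> real" and S :: "(real^'p) set"
  assumes bnd: "bounded (range s)" and mono: "mono s" and nc: "\<not> (\<exists>a. \<forall>x. s x = a)"
    and S: "bounded S"
  shows "approxable s S (\<lambda>x. exp (w \<bullet> x))"
  unfolding approxable_def
proof (intro allI impI)
  fix \<epsilon> :: real assume ep: "\<epsilon> > 0"
  obtain \<beta>0 where b0: "s \<beta>0 \<noteq> 0" using nc by (metis)
  have "bounded ((\<lambda>x. w \<bullet> x) ` S)"
    using S by (intro bounded_linear_image) (auto intro: bounded_linear_inner_right)
  then obtain R0 where R0: "\<And>x. x \<in> S \<Longrightarrow> \<bar>w \<bullet> x\<bar> \<le> R0"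
    unfolding bounded_iff by auto
  define R where "R = \<bar>R0\<bar> + 1"
  have RS: "w \<bullet> x \<in> {-R..R}" if "x \<in> S" for x using R0[OF that] by (auto simp: R_def)
  have "\<exists>C (N::nat) \<alpha> \<beta> e. \<forall>t\<in>{-R..R}. \<bar>exp t - (C + (\<Sum>j<N. e j * s (\<alpha> j * t + \<beta> j)))\<bar> < \<epsilon>"
    by (rule sigmoid_1d[OF bnd mono nc _ _ ep]) (auto simp: R_def intro: continuous_intros)
  then obtain C N \<alpha> \<beta> e where ap: "\<forall>t\<in>{-R..R}. \<bar>exp t - (C + (\<Sum>j<(N::nat). e j * s (\<alpha> j * t + \<beta> j)))\<bar> < \<epsilon>"
    by blast
  define g where "g x = C + (\<Sum>j<N. e j * s (\<alpha> j * (w \<bullet> x) + \<beta> j))" for x :: "real^'p"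
  have "isnet s g" unfolding g_def by (intro isnet_add isnet_const[of s \<beta>0, OF b0] isnet_ridge)
  moreover have "\<forall>x\<in>S. \<bar>exp (w \<bullet> x) - g x\<bar> < \<epsilon>" using ap RS by (simp add: g_def)
  ultimately show "\<exists>g. isnet s g \<and> (\<forall>x\<in>S. \<bar>exp (w \<bullet> x) - g x\<bar> < \<epsilon>)" by blast
qed

lemma sigmoid_approx_expsum:
  fixes s :: "real \<Rightarrow> real" and S :: "(real^'p) set"
  assumes bnd: "bounded (range s)" and mono: "mono s" and nc: "\<not> (\<exists>a. \<forall>x. s x = a)"
    and S: "bounded S"
  shows "approxable s S (expsum L)"
proof (induction L)
  case Nil
  have "(\<lambda>x. 0::real) = expsum []" by (simp add: fun_eq_iff)
  moreover have "approxable s S (\<lambda>x. 0)" unfolding approxable_def using isnet_zero by force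
  ultimately show ?case by simp
next
  case (Cons p L)
  obtain a w where p: "p = (a, w)" by (cases p)
  have e: "expsum (p # L) = (\<lambda>x. a * exp (w \<bullet> x) + expsum L x)" by (simp add: p fun_eq_iff)
  show ?case unfolding e
    by (intro approxable_add approxable_scale sigmoid_approx_exp[OF bnd mono nc S] Cons)
qed

lemma sigmoid_univ:
  fixes s :: "real \<Rightarrow> real" and S :: "(real^'p) set"
  assumes bnd: "bounded (range s)" and mono: "mono s" and nc: "\<not> (\<exists>a. \<forall>x. s x = a)"
    and S: "compact S" and f: "continuous_on S f"
  shows "approxable s S f"
proof -
  define R where "R = {f. \<exists>L::(real \<times> (real^'p)) list. f = expsum L}"
  interpret function_ring_on R S
  proof
    show "compact S" by fact
  next
    fix f assume "f \<in> R" then show "continuous_on S f" by (auto simp: R_def expsum_cont)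
  next
    fix f g assume "f \<in> R" "g \<in> R"
    then obtain L1 L2 where "f = expsum L1" "g = expsum L2" by (auto simp: R_def)
    then have "(\<lambda>x. f x + g x) = expsum (L1 @ L2)" by (simp add: fun_eq_iff expsum_append)
    then show "(\<lambda>x. f x + g x) \<in> R" by (auto simp: R_def)
  next
    fix f g assume "f \<in> R" "g \<in> R"
    then obtain L1 L2 where "f = expsum L1" "g = expsum L2" by (auto simp: R_def)
    then have "(\<lambda>x. f x * g x) = expsum (expmul L1 L2)" by (simp add: fun_eq_iff expsum_mul)
    then show "(\<lambda>x. f x * g x) \<in> R" by (auto simp: R_def)
  next
    fix c :: real
    have "(\<lambda>_. c) = expsum [(c, 0)]" by (simp add: fun_eq_iff)
    then show "(\<lambda>_. c) \<in> R" by (auto simp: R_def)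
  next
    fix x y :: "real^'p" assume "x \<noteq> y"
    then obtain i where i: "x $ i \<noteq> y $ i" by (auto simp: vec_eq_iff)
    have "expsum [(1, axis i 1)] x \<noteq> expsum [(1, axis i 1)] y"
      using i by (simp add: inner_axis')
    then show "\<exists>f\<in>R. f x \<noteq> f y" unfolding R_def by blast
  qed
  show ?thesis
  proof (rule approxable_limit)
    fix \<epsilon> :: real assume "\<epsilon> > 0"
    then obtain g where "g \<in> R" "\<forall>x\<in>S. \<bar>f x - g x\<bar> < \<epsilon>" using Stone_Weierstrass_basic[OF f] by blast
    moreover then obtain L where "g = expsum L" by (auto simp: R_def)
    moreover have "approxable s S (expsum L)"
      using sigmoid_approx_expsum[OF bnd mono nc compact_imp_bounded[OF S]] .
    ultimately show "\<exists>f'. approxable s S f' \<and> (\<forall>x\<in>S. \<bar>f x - f' x\<bar> < \<epsilon>)" by blast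
  qed
qed

definition clamp01 :: "real \<Rightarrow> real" where "clamp01 u = relu u - relu (u - 1)"

lemma clamp01_props: "bounded (range clamp01)" "mono clamp01" "\<not> (\<exists>a. \<forall>x. clamp01 x = a)"
proof -
  have r: "clamp01 u \<in> {0..1}" for u by (auto simp: clamp01_def relu_def)
  show "bounded (range clamp01)"
    by (rule bounded_subset[OF bounded_cbox[of 0 1]]) (use r in auto)
  show "mono clamp01" by (auto simp: mono_def clamp01_def relu_def)
  have c01: "clamp01 0 = 0" "clamp01 1 = 1" by (auto simp: clamp01_def relu_def)
  show "\<not> (\<exists>a. \<forall>x. clamp01 x = a)"
  proof
    assume "\<exists>a. \<forall>x. clamp01 x = a"
    then obtain a where "\<forall>x. clamp01 x = a" by blast
    hence "clamp01 0 = clamp01 1" by simp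
    with c01 show False by simp
  qed
qed

lemma isnet_clamp_relu:
  assumes "isnet clamp01 g" shows "isnet relu g"
proof -
  obtain T B c e where g: "\<And>x. g x = (\<Sum>t<(T::nat). e t * clamp01 (B t \<bullet> x + c t))"
    using assms unfolding isnet_def by blast
  define e' where "e' t = - e t" for t
  define c' where "c' t = c t - 1" for t
  have "g x = (\<Sum>t<T. e t * relu (B t \<bullet> x + c t)) + (\<Sum>t<T. e' t * relu (B t \<bullet> x + c' t))" for x
    unfolding g clamp01_def e'_def c'_def by (simp add: sum.distrib[symmetric] algebra_simps)
  moreover have "isnet relu (\<lambda>x. (\<Sum>t<T. e t * relu (B t \<bullet> x + c t)) + (\<Sum>t<T. e' t * relu (B t \<bullet> x + c' t)))"
  proof (rule isnet_add)
    show "isnet relu (\<lambda>x. \<Sum>t<T. e t * relu (B t \<bullet> x + c t))"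
      unfolding isnet_def by (rule exI[of _ T], rule exI[of _ B], rule exI[of _ c], rule exI[of _ e]) simp
    show "isnet relu (\<lambda>x. \<Sum>t<T. e' t * relu (B t \<bullet> x + c' t))"
      unfolding isnet_def by (rule exI[of _ T], rule exI[of _ B], rule exI[of _ c'], rule exI[of _ e']) simp
  qed
  ultimately show ?thesis by presburger
qed

lemma univ_approx:
  fixes \<sigma> :: "real \<Rightarrow> real" and S :: "(real^'p) set"
  assumes hyp: "\<sigma> = relu \<or>
         (continuous_on UNIV \<sigma> \<and> bounded (range \<sigma>) \<and> mono \<sigma> \<and> \<not> (\<exists>a. \<forall>x. \<sigma> x = a))"
    and S: "compact S" and f: "continuous_on S f" and ep: "\<epsilon> > 0"
  shows "\<exists>g. isnet \<sigma> g \<and> (\<forall>x\<in>S. \<bar>f x - g x\<bar> < \<epsilon>)"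
  using hyp
proof
  assume r: "\<sigma> = relu"
  have "approxable clamp01 S f" using sigmoid_univ[OF clamp01_props S f] .
  then obtain g where "isnet clamp01 g" "\<forall>x\<in>S. \<bar>f x - g x\<bar> < \<epsilon>" using ep unfolding approxable_def by blast
  then show ?thesis using isnet_clamp_relu r by blast
next
  assume "continuous_on UNIV \<sigma> \<and> bounded (range \<sigma>) \<and> mono \<sigma> \<and> \<not> (\<exists>a. \<forall>x. \<sigma> x = a)"
  then have "approxable \<sigma> S f" using sigmoid_univ[OF _ _ _ S f] by blast
  then show ?thesis using ep unfolding approxable_def by blast
qed

lemma shared_layer:
  fixes g :: "nat \<Rightarrow> real^'p \<Rightarrow> real" and n :: nat
  assumes "\<forall>l<n. isnet \<sigma> (g l)"
  shows "\<exists>T0. \<forall>T\<ge>T0. \<exists>(A::nat \<Rightarrow> nat \<Rightarrow> real) (B::nat \<Rightarrow> real^'p) (c::nat \<Rightarrow> real).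
           (\<forall>l<n. \<forall>x. g l x = (\<Sum>t<T. A l t * \<sigma> (B t \<bullet> x + c t))) \<and> (\<forall>l\<ge>n. \<forall>t. A l t = 0)"
  using assms
proof (induction n)
  case 0
  show ?case
    by (rule exI[of _ 0], intro allI impI exI[of _ "\<lambda>_ _. 0"] exI[of _ "\<lambda>_. 0"]) simp
next
  case (Suc n)
  obtain T0 where T0: "\<forall>T\<ge>T0. \<exists>(A::nat \<Rightarrow> nat \<Rightarrow> real) (B::nat \<Rightarrow> real^'p) (c::nat \<Rightarrow> real).
           (\<forall>l<n. \<forall>x. g l x = (\<Sum>t<T. A l t * \<sigma> (B t \<bullet> x + c t))) \<and> (\<forall>l\<ge>n. \<forall>t. A l t = 0)"
    using Suc by auto
  have "isnet \<sigma> (g n)" using Suc.prems by simp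
  then obtain T1 B1 c1 e1 where g1: "\<And>x. g n x = (\<Sum>t<(T1::nat). e1 t * \<sigma> (B1 t \<bullet> x + c1 t))"
    unfolding isnet_def by blast
  have "\<exists>(A::nat \<Rightarrow> nat \<Rightarrow> real) (B::nat \<Rightarrow> real^'p) (c::nat \<Rightarrow> real).
           (\<forall>l<Suc n. \<forall>x. g l x = (\<Sum>t<T. A l t * \<sigma> (B t \<bullet> x + c t))) \<and> (\<forall>l\<ge>Suc n. \<forall>t. A l t = 0)"
    if T: "T \<ge> T0 + T1" for T
  proof -
    define T' where "T' = T - T1"
    have TT: "T = T' + T1" "T' \<ge> T0" using T by (auto simp: T'_def)
    obtain A B c where A: "\<forall>l<n. \<forall>x. g l x = (\<Sum>t<T'. A l t * \<sigma> (B t \<bullet> x + c t))"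
      and A0: "\<forall>l\<ge>n. \<forall>t. A l t = (0::real)"
      using T0 TT(2) by blast
    define B' where "B' t = (if t < T' then B t else B1 (t - T'))" for t
    define c' where "c' t = (if t < T' then c t else c1 (t - T'))" for t
    define A' where "A' l t = (if l < n then (if t < T' then A l t else 0)
        else if l = n then (if t < T' then 0 else e1 (t - T')) else 0)" for l t
    have "\<forall>l<Suc n. \<forall>x. g l x = (\<Sum>t<T. A' l t * \<sigma> (B' t \<bullet> x + c' t))"
    proof (intro allI impI)
      fix l x assume l: "l < Suc n"
      show "g l x = (\<Sum>t<T. A' l t * \<sigma> (B' t \<bullet> x + c' t))"
      proof (cases "l < n")
        case True
        then show ?thesis unfolding TT(1) sum_concat_nat using A
          by (simp add: A'_def B'_def c'_def)
      next
        case False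
        then have "l = n" using l by simp
        then show ?thesis unfolding TT(1) sum_concat_nat
          by (simp add: A'_def B'_def c'_def g1)
      qed
    qed
    moreover have "\<forall>l\<ge>Suc n. \<forall>t. A' l t = 0" by (simp add: A'_def)
    ultimately show ?thesis by blast
  qed
  then show ?case by blast
qed

lemma prod_err:
  fixes a a' b b' \<eta> Bd :: real
  assumes "\<bar>a' - a\<bar> \<le> \<eta>" "\<bar>b' - b\<bar> \<le> \<eta>" "\<bar>a\<bar> \<le> Bd" "\<bar>b\<bar> \<le> Bd" "\<eta> \<le> 1"
  shows "\<bar>a' * b' - a * b\<bar> \<le> \<eta> * (2 * Bd + 1)"
proof -
  have b': "\<bar>b'\<bar> \<le> Bd + 1" using assms by linarith
  have "a' * b' - a * b = (a' - a) * b' + a * (b' - b)" by (simp add: algebra_simps)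
  hence "\<bar>a' * b' - a * b\<bar> \<le> \<bar>a' - a\<bar> * \<bar>b'\<bar> + \<bar>a\<bar> * \<bar>b' - b\<bar>"
    by (metis abs_mult abs_triangle_ineq)
  also have "\<dots> \<le> \<eta> * (Bd + 1) + Bd * \<eta>"
    using assms b' by (intro add_mono mult_mono) auto
  also have "\<dots> = \<eta> * (2 * Bd + 1)" by (simp add: algebra_simps)
  finally show ?thesis .
qed

lemma kernel_approx:
  fixes S :: "(real^'p) set" and f :: "real^'p \<Rightarrow> 'a::euclidean_space" and g :: "'a \<Rightarrow> 'a \<Rightarrow> real"
  assumes cpd: "cpd_kernel_on Y g" and S: "compact S" "S \<noteq> {}"
    and fc: "continuous_on S f" and fY: "f ` S \<subseteq> Y" and ep: "\<epsilon> > 0"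
  shows "\<exists>(n::nat) \<phi> H. (\<forall>l<n. continuous_on S (\<phi> l)) \<and> continuous_on S H \<and>
     (\<forall>x\<in>S. \<forall>x'\<in>S. \<bar>g (f x) (f x') - ((\<Sum>l<n. \<phi> l x * \<phi> l x') + H x + H x')\<bar> \<le> \<epsilon>)"
proof -
  define G where "G z = g (f (fst z)) (f (snd z))" for z :: "(real^'p) \<times> (real^'p)"
  have gc: "continuous_on (Y \<times> Y) (\<lambda>(y, y'). g y y')"
    using cpd unfolding cpd_kernel_on_def is_kernel_on_def by blast
  have pc: "continuous_on (S \<times> S) (\<lambda>z. (f (fst z), f (snd z)))"
    by (intro continuous_intros continuous_on_compose2[OF fc]) auto
  have "continuous_on (S \<times> S) ((\<lambda>(y, y'). g y y') \<circ> (\<lambda>z. (f (fst z), f (snd z))))"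
    by (rule continuous_on_compose[OF pc continuous_on_subset[OF gc]]) (use fY in auto)
  hence Gc: "continuous_on (S \<times> S) G" by (simp add: G_def o_def)
  have "uniformly_continuous_on (S \<times> S) G"
    using Gc compact_Times[OF S(1) S(1)] by (simp add: compact_uniformly_continuous)
  then obtain \<delta> where dp: "\<delta> > 0"
    and uc0: "\<forall>z\<in>S \<times> S. \<forall>z'\<in>S \<times> S. dist z' z < \<delta> \<longrightarrow> dist (G z') (G z) < \<epsilon>"
    unfolding uniformly_continuous_on_def using ep by blast
  have uc: "\<And>z z'. z \<in> S \<times> S \<Longrightarrow> z' \<in> S \<times> S \<Longrightarrow> dist z' z < \<delta> \<Longrightarrow> dist (G z') (G z) < \<epsilon>"
    using uc0 by blast
  define r where "r = \<delta> / 2"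
  have rp: "r > 0" using dp by (simp add: r_def)
  obtain k where k: "finite k" "k \<subseteq> S" "S \<subseteq> (\<Union>x\<in>k. ball x r)"
    using seq_compact_imp_totally_bounded[OF compact_imp_seq_compact[OF S(1)], rule_format, OF rp] by (elim exE conjE) auto
  obtain n zs where kz: "k = zs ` {i::nat. i < n}" using k(1)[unfolded finite_conv_nat_seg_image] by (elim exE) simp
  have zsS: "zs i \<in> S" if "i < n" for i using k(2) kz that by auto
  have cover: "\<exists>i<n. dist x (zs i) < r" if xS: "x \<in> S" for x
  proof -
    obtain z where z: "z \<in> k" "x \<in> ball z r" using k(3) xS by blast
    then obtain i where "i < n" "z = zs i" using kz by blast
    then show ?thesis using z(2) by (auto simp: dist_commute)
  qed
  have np: "n > 0"
  proof -
    obtain x where "x \<in> S" using S(2) by blast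
    then obtain i where "i < n" using cover by blast
    then show ?thesis by simp
  qed
  define w where "w i x = max 0 (r - dist x (zs i))" for i x
  define W where "W x = (\<Sum>i<n. w i x)" for x
  have w0: "w i x \<ge> 0" for i x by (simp add: w_def)
  have Wp: "W x > 0" if xS: "x \<in> S" for x
  proof -
    obtain i where i: "i < n" "dist x (zs i) < r" using cover[OF xS] by blast
    have "w i x > 0" using i by (simp add: w_def)
    moreover have "w i x \<le> W x" unfolding W_def using i w0 by (intro member_le_sum) auto
    ultimately show ?thesis by simp
  qed
  define \<psi> where "\<psi> i x = w i x / W x" for i x
  have \<psi>c: "continuous_on S (\<psi> i)" for i
  proof -
    have wc: "continuous_on S (w j)" for j unfolding w_def by (intro continuous_intros)
    have Wc: "continuous_on S W" unfolding W_def by (intro continuous_intros wc)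
    show ?thesis unfolding \<psi>_def
      by (rule continuous_on_divide[OF wc Wc]) (use Wp in force)
  qed
  have \<psi>0: "\<psi> i x \<ge> 0" for i x using w0 by (simp add: \<psi>_def W_def sum_nonneg)
  have \<psi>1: "(\<Sum>i<n. \<psi> i x) = 1" if "x \<in> S" for x
    using Wp[OF that] by (simp add: \<psi>_def sum_divide_distrib[symmetric] W_def)
  have \<psi>loc: "dist x (zs i) < r" if "\<psi> i x \<noteq> 0" for i x
    using that by (auto simp: \<psi>_def w_def)
  have ysY: "\<forall>i<n. f (zs i) \<in> Y" using zsS fY by auto
  obtain a h where ah: "\<forall>i<n. \<forall>j<n. g (f (zs i)) (f (zs j)) = (\<Sum>l<n. a l i * a l j) + h i + h j"
    using cpd_decomp[OF cpd ysY np] by blast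
  define \<phi> where "\<phi> l x = (\<Sum>i<n. a l i * \<psi> i x)" for l x
  define H where "H x = (\<Sum>i<n. h i * \<psi> i x)" for x
  have \<phi>c: "\<forall>l<n. continuous_on S (\<phi> l)" unfolding \<phi>_def by (intro allI impI continuous_intros \<psi>c)
  have Hc: "continuous_on S H" unfolding H_def by (intro continuous_intros \<psi>c)
  have main: "\<bar>g (f x) (f x') - ((\<Sum>l<n. \<phi> l x * \<phi> l x') + H x + H x')\<bar> \<le> \<epsilon>"
    if x: "x \<in> S" and x': "x' \<in> S" for x x'
  proof -
    define P where "P = (\<Sum>i<n. \<Sum>j<n. \<psi> i x * \<psi> j x' * g (f (zs i)) (f (zs j)))"
    have eq1: "P = (\<Sum>l<n. \<phi> l x * \<phi> l x') + H x + H x'"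
    proof -
      have "P = (\<Sum>i<n. \<Sum>j<n. \<psi> i x * \<psi> j x' * (\<Sum>l<n. a l i * a l j))
              + (\<Sum>i<n. \<Sum>j<n. \<psi> i x * \<psi> j x' * h i)
              + (\<Sum>i<n. \<Sum>j<n. \<psi> i x * \<psi> j x' * h j)"
        unfolding P_def by (simp add: ah sum.distrib distrib_left)
      also have "(\<Sum>i<n. \<Sum>j<n. \<psi> i x * \<psi> j x' * (\<Sum>l<n. a l i * a l j)) = (\<Sum>l<n. \<phi> l x * \<phi> l x')"
      proof -
        have "(\<Sum>i<n. \<Sum>j<n. \<psi> i x * \<psi> j x' * (\<Sum>l<n. a l i * a l j))
            = (\<Sum>i<n. \<Sum>j<n. \<Sum>l<n. (a l i * \<psi> i x) * (a l j * \<psi> j x'))"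
          by (simp add: sum_distrib_left mult_ac)
        also have "\<dots> = (\<Sum>i<n. \<Sum>l<n. \<Sum>j<n. (a l i * \<psi> i x) * (a l j * \<psi> j x'))"
          by (intro sum.cong refl sum.swap)
        also have "\<dots> = (\<Sum>l<n. \<Sum>i<n. \<Sum>j<n. (a l i * \<psi> i x) * (a l j * \<psi> j x'))"
          by (rule sum.swap)
        also have "\<dots> = (\<Sum>l<n. \<phi> l x * \<phi> l x')"
          by (simp add: \<phi>_def sum_product)
        finally show ?thesis .
      qed
      also have "(\<Sum>i<n. \<Sum>j<n. \<psi> i x * \<psi> j x' * h i) = H x"
      proof -
        have "(\<Sum>i<n. \<Sum>j<n. \<psi> i x * \<psi> j x' * h i) = (\<Sum>i<n. h i * \<psi> i x) * (\<Sum>j<n. \<psi> j x')"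
          by (simp add: sum_distrib_left sum_distrib_right mult_ac)
        then show ?thesis using \<psi>1[OF x'] by (simp add: H_def)
      qed
      also have "(\<Sum>i<n. \<Sum>j<n. \<psi> i x * \<psi> j x' * h j) = H x'"
      proof -
        have "(\<Sum>i<n. \<psi> i x) * (\<Sum>j<n. h j * \<psi> j x') = (\<Sum>i<n. \<Sum>j<n. \<psi> i x * (h j * \<psi> j x'))"
          by (rule sum_product)
        also have "\<dots> = (\<Sum>i<n. \<Sum>j<n. \<psi> i x * \<psi> j x' * h j)"
          by (simp add: mult_ac)
        finally have "(\<Sum>i<n. \<Sum>j<n. \<psi> i x * \<psi> j x' * h j) = (\<Sum>i<n. \<psi> i x) * (\<Sum>j<n. h j * \<psi> j x')" by simp
        then show ?thesis using \<psi>1[OF x] by (simp add: H_def)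
      qed
      finally show ?thesis .
    qed
    have eq2: "g (f x) (f x') = (\<Sum>i<n. \<Sum>j<n. \<psi> i x * \<psi> j x' * g (f x) (f x'))"
    proof -
      have "(\<Sum>i<n. \<Sum>j<n. \<psi> i x * \<psi> j x' * g (f x) (f x')) = (\<Sum>i<n. \<psi> i x) * (\<Sum>j<n. \<psi> j x') * g (f x) (f x')"
        by (simp add: sum_distrib_left sum_distrib_right mult_ac)
      then show ?thesis using \<psi>1[OF x] \<psi>1[OF x'] by simp
    qed
    have tm: "\<bar>\<psi> i x * \<psi> j x' * (g (f x) (f x') - g (f (zs i)) (f (zs j)))\<bar> \<le> \<psi> i x * \<psi> j x' * \<epsilon>"
      if ij: "i < n" "j < n" for i j
    proof (cases "\<psi> i x = 0 \<or> \<psi> j x' = 0")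
      case True then show ?thesis by auto
    next
      case False
      then have d1: "dist x (zs i) < r" and d2: "dist x' (zs j) < r" using \<psi>loc by auto
      have "dist (zs i, zs j) (x, x') \<le> dist (zs i) x + dist (zs j) x'"
        unfolding dist_Pair_Pair using sqrt_sum_squares_le_sum_abs[of "dist (zs i) x" "dist (zs j) x'"] by simp
      also have "\<dots> < \<delta>" using d1 d2 by (simp add: r_def dist_commute)
      finally have "dist (G (zs i, zs j)) (G (x, x')) < \<epsilon>"
        using uc[of "(x, x')" "(zs i, zs j)"] x x' zsS ij by auto
      hence "\<bar>g (f x) (f x') - g (f (zs i)) (f (zs j))\<bar> \<le> \<epsilon>" by (simp add: G_def dist_real_def abs_minus_commute)
      then show ?thesis using \<psi>0[of i x] \<psi>0[of j x'] by (simp add: abs_mult mult_left_mono)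
    qed
    have "g (f x) (f x') - P = (\<Sum>i<n. \<Sum>j<n. \<psi> i x * \<psi> j x' * (g (f x) (f x') - g (f (zs i)) (f (zs j))))"
      unfolding P_def by (subst eq2) (simp add: sum_subtractf right_diff_distrib)
    also have "\<bar>\<dots>\<bar> \<le> (\<Sum>i<n. \<Sum>j<n. \<bar>\<psi> i x * \<psi> j x' * (g (f x) (f x') - g (f (zs i)) (f (zs j)))\<bar>)"
      by (rule order_trans[OF sum_abs sum_mono]) (rule sum_abs)
    also have "\<dots> \<le> (\<Sum>i<n. \<Sum>j<n. \<psi> i x * \<psi> j x' * \<epsilon>)"
      by (intro sum_mono tm) auto
    also have "\<dots> = \<epsilon>"
    proof -
      have "(\<Sum>i<n. \<Sum>j<n. \<psi> i x * \<psi> j x' * \<epsilon>) = (\<Sum>i<n. \<psi> i x) * (\<Sum>j<n. \<psi> j x') * \<epsilon>"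
        by (simp add: sum_distrib_left sum_distrib_right mult_ac)
      then show ?thesis using \<psi>1[OF x] \<psi>1[OF x'] by simp
    qed
    finally show ?thesis using eq1 by simp
  qed
  show ?thesis using \<phi>c Hc main by blast
qed

theorem theorem4p1:
  fixes M :: real and Y :: "'a::euclidean_space set"
    and fstar :: "real^'p \<Rightarrow> 'a" and gstar :: "'a \<Rightarrow> 'a \<Rightarrow> real"
    and \<sigma> :: "real \<Rightarrow> real" and \<epsilon> :: real
  assumes "M > 0"
    and "closed Y"
    and "continuous_on (cube M) fstar" and "fstar ` cube M \<subseteq> Y"
    and "cpd_kernel_on Y gstar"
    and "\<sigma> = relu \<or>
         (continuous_on UNIV \<sigma> \<and> bounded (range \<sigma>) \<and> mono \<sigma> \<and> \<not> (\<exists>a. \<forall>x. \<sigma> x = a))"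
    and "\<epsilon> > 0"
  shows "\<exists>K0 T0'. \<forall>K\<ge>K0. \<exists>T0. \<forall>T\<ge>T0. \<forall>T'\<ge>T0'.
           \<exists>(A::nat \<Rightarrow> nat \<Rightarrow> real) (B::nat \<Rightarrow> real^'p) (c::nat \<Rightarrow> real)
            (e::nat \<Rightarrow> real) (F::nat \<Rightarrow> real^'p) (ob::nat \<Rightarrow> real).
             \<forall>x\<in>cube M. \<forall>x'\<in>cube M.
               \<bar>gstar (fstar x) (fstar x')
                 - ((\<Sum>k<K. fpsi \<sigma> T A B c x k * fpsi \<sigma> T A B c x' k)
                    + uxi \<sigma> T' e F ob x + uxi \<sigma> T' e F ob x')\<bar> < \<epsilon>"
proof -
  note Mp = assms(1) and fc = assms(3) and fY = assms(4) and cpd = assms(5)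
    and hyp = assms(6) and ep = assms(7)
  define S :: "(real^'p) set" where "S = cube M"
  have Seq: "S = cbox (\<chi> i. -M) (\<chi> i. M)"
  proof (rule set_eqI)
    fix x :: "real^'p"
    show "x \<in> S \<longleftrightarrow> x \<in> cbox (\<chi> i. -M) (\<chi> i. M)"
      unfolding S_def cube_def mem_box_cart by (simp add: abs_le_iff) (meson minus_le_iff)
  qed
  have Sc: "compact S" unfolding Seq by (rule compact_cbox)
  have S0: "0 \<in> S" using Mp by (simp add: S_def cube_def)
  hence Sne: "S \<noteq> {}" by blast
  have ep4: "\<epsilon> / 4 > 0" using ep by simp
  obtain n :: nat and \<phi> H where \<phi>c: "\<forall>l<n. continuous_on S (\<phi> l)" and Hc: "continuous_on S H"
    and kern: "\<forall>x\<in>S. \<forall>x'\<in>S. \<bar>gstar (fstar x) (fstar x') - ((\<Sum>l<n. \<phi> l x * \<phi> l x') + H x + H x')\<bar> \<le> \<epsilon> / 4"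
    using kernel_approx[OF cpd Sc Sne _ _ ep4, of fstar] fc fY unfolding S_def by blast
  have "continuous_on S (\<lambda>x. \<Sum>l<n. \<bar>\<phi> l x\<bar>)" using \<phi>c by (intro continuous_intros) auto
  hence "bounded ((\<lambda>x. \<Sum>l<n. \<bar>\<phi> l x\<bar>) ` S)" using Sc by (simp add: compact_continuous_image compact_imp_bounded)
  then obtain Bd0 where Bd0: "\<And>x. x \<in> S \<Longrightarrow> norm (\<Sum>l<n. \<bar>\<phi> l x\<bar>) \<le> Bd0" unfolding bounded_iff by auto
  define Bd where "Bd = \<bar>Bd0\<bar>"
  have Bdp: "Bd \<ge> 0" by (simp add: Bd_def)
  have \<phi>B: "\<bar>\<phi> l x\<bar> \<le> Bd" if "l < n" "x \<in> S" for l x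
  proof -
    have "\<bar>\<phi> l x\<bar> \<le> (\<Sum>l<n. \<bar>\<phi> l x\<bar>)" using that by (intro member_le_sum) auto
    also have "\<dots> \<le> Bd0" using Bd0[OF that(2)] by simp
    finally show ?thesis by (simp add: Bd_def)
  qed
  define \<eta> where "\<eta> = min 1 (\<epsilon> / (8 * (real n + 1) * (2 * Bd + 1)))"
  have den: "8 * (real n + 1) * (2 * Bd + 1) > 0" using Bdp by simp
  have \<eta>p: "\<eta> > 0" using ep den by (simp add: \<eta>_def)
  have \<eta>1: "\<eta> \<le> 1" by (simp add: \<eta>_def)
  have \<eta>2: "\<eta> \<le> \<epsilon> / (8 * (real n + 1) * (2 * Bd + 1))" by (simp add: \<eta>_def)
  have \<eta>n: "real n * (\<eta> * (2 * Bd + 1)) \<le> \<epsilon> / 8"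
  proof -
    have "\<eta> * (8 * (real n + 1) * (2 * Bd + 1)) \<le> \<epsilon>" using \<eta>2 den by (simp add: le_divide_eq)
    moreover have "real n * (\<eta> * (2 * Bd + 1)) * 8 \<le> \<eta> * (8 * (real n + 1) * (2 * Bd + 1))"
      using \<eta>p Bdp by (simp add: algebra_simps)
    ultimately show ?thesis by simp
  qed
  have \<eta>8: "\<eta> \<le> \<epsilon> / 8"
  proof -
    have "\<eta> * (8 * (real n + 1) * (2 * Bd + 1)) \<le> \<epsilon>" using \<eta>2 den by (simp add: le_divide_eq)
    moreover have "\<eta> * 8 \<le> \<eta> * (8 * (real n + 1) * (2 * Bd + 1))"
      using \<eta>p Bdp by (simp add: algebra_simps)
    ultimately show ?thesis by simp
  qed
  have "\<forall>l. \<exists>g. l < n \<longrightarrow> (isnet \<sigma> g \<and> (\<forall>x\<in>S. \<bar>\<phi> l x - g x\<bar> < \<eta>))"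
    using univ_approx[OF hyp Sc _ \<eta>p] \<phi>c by blast
  then obtain gs where gs: "\<forall>l<n. isnet \<sigma> (gs l) \<and> (\<forall>x\<in>S. \<bar>\<phi> l x - gs l x\<bar> < \<eta>)"
    by metis
  obtain gu where gu: "isnet \<sigma> gu" "\<forall>x\<in>S. \<bar>H x - gu x\<bar> < \<eta>"
    using univ_approx[OF hyp Sc Hc \<eta>p] by blast
  obtain T0 where T0: "\<forall>T\<ge>T0. \<exists>(A::nat \<Rightarrow> nat \<Rightarrow> real) (B::nat \<Rightarrow> real^'p) (c::nat \<Rightarrow> real).
           (\<forall>l<n. \<forall>x. gs l x = (\<Sum>t<T. A l t * \<sigma> (B t \<bullet> x + c t))) \<and> (\<forall>l\<ge>n. \<forall>t. A l t = 0)"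
    using shared_layer[of n \<sigma> gs] gs by blast
  obtain Tu where Tu: "\<forall>T\<ge>Tu. \<exists>(A::nat \<Rightarrow> nat \<Rightarrow> real) (B::nat \<Rightarrow> real^'p) (c::nat \<Rightarrow> real).
           (\<forall>l<1. \<forall>x. (\<lambda>_. gu) l x = (\<Sum>t<T. A l t * \<sigma> (B t \<bullet> x + c t))) \<and> (\<forall>l\<ge>1. \<forall>t. A l t = 0)"
    using shared_layer[of 1 \<sigma> "\<lambda>_. gu"] gu(1) by blast
  have "\<forall>K\<ge>n. \<exists>T0. \<forall>T\<ge>T0. \<forall>T'\<ge>Tu.
           \<exists>(A::nat \<Rightarrow> nat \<Rightarrow> real) (B::nat \<Rightarrow> real^'p) (c::nat \<Rightarrow> real)
            (e::nat \<Rightarrow> real) (F::nat \<Rightarrow> real^'p) (ob::nat \<Rightarrow> real).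
             \<forall>x\<in>cube M. \<forall>x'\<in>cube M.
               \<bar>gstar (fstar x) (fstar x')
                 - ((\<Sum>k<K. fpsi \<sigma> T A B c x k * fpsi \<sigma> T A B c x' k)
                    + uxi \<sigma> T' e F ob x + uxi \<sigma> T' e F ob x')\<bar> < \<epsilon>"
  proof (intro allI impI)
    fix K :: nat assume Kn: "K \<ge> n"
    show "\<exists>T0. \<forall>T\<ge>T0. \<forall>T'\<ge>Tu.
           \<exists>(A::nat \<Rightarrow> nat \<Rightarrow> real) (B::nat \<Rightarrow> real^'p) (c::nat \<Rightarrow> real)
            (e::nat \<Rightarrow> real) (F::nat \<Rightarrow> real^'p) (ob::nat \<Rightarrow> real).
             \<forall>x\<in>cube M. \<forall>x'\<in>cube M.
               \<bar>gstar (fstar x) (fstar x')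
                 - ((\<Sum>k<K. fpsi \<sigma> T A B c x k * fpsi \<sigma> T A B c x' k)
                    + uxi \<sigma> T' e F ob x + uxi \<sigma> T' e F ob x')\<bar> < \<epsilon>"
    proof (intro exI[of _ T0] allI impI)
      fix T T' :: nat assume T: "T \<ge> T0" and T': "T' \<ge> Tu"
      obtain A B c where A: "\<forall>l<n. \<forall>x. gs l x = (\<Sum>t<T. A l t * \<sigma> (B t \<bullet> x + c t))"
        and A0: "\<forall>l\<ge>n. \<forall>t. A l t = (0::real)"
        using T0 T by blast
      obtain Au Bu cu where Au: "\<forall>x. gu x = (\<Sum>t<T'. Au 0 t * \<sigma> (Bu t \<bullet> x + cu t))"
        using Tu T' by fastforce
      have fp1: "fpsi \<sigma> T A B c x k = gs k x" if "k < n" for x k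
        using A that by (simp add: fpsi_def)
      have fp0: "fpsi \<sigma> T A B c x k = 0" if "k \<ge> n" for x k
        using A0 that by (simp add: fpsi_def)
      have ux: "uxi \<sigma> T' (Au 0) Bu cu x = gu x" for x
        using Au by (simp add: uxi_def)
      have sumeq: "(\<Sum>k<K. fpsi \<sigma> T A B c x k * fpsi \<sigma> T A B c x' k) = (\<Sum>k<n. gs k x * gs k x')" for x x'
      proof -
        have "(\<Sum>k<K. fpsi \<sigma> T A B c x k * fpsi \<sigma> T A B c x' k) = (\<Sum>k<n. fpsi \<sigma> T A B c x k * fpsi \<sigma> T A B c x' k)"
          by (rule sum.mono_neutral_right) (use Kn fp0 in auto)
        also have "\<dots> = (\<Sum>k<n. gs k x * gs k x')" by (intro sum.cong) (auto simp: fp1)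
        finally show ?thesis .
      qed
      have bound: "\<bar>gstar (fstar x) (fstar x') - ((\<Sum>k<n. gs k x * gs k x') + gu x + gu x')\<bar> < \<epsilon>"
        if x: "x \<in> S" and x': "x' \<in> S" for x x'
      proof -
        define E0 where "E0 = gstar (fstar x) (fstar x') - ((\<Sum>l<n. \<phi> l x * \<phi> l x') + H x + H x')"
        define D1 where "D1 = (\<Sum>k<n. gs k x * gs k x' - \<phi> k x * \<phi> k x')"
        have e0: "\<bar>E0\<bar> \<le> \<epsilon> / 4" using kern x x' by (simp add: E0_def)
        have "\<bar>D1\<bar> \<le> (\<Sum>k<n. \<bar>gs k x * gs k x' - \<phi> k x * \<phi> k x'\<bar>)" unfolding D1_def by (rule sum_abs)
        also have "\<dots> \<le> (\<Sum>k<n. \<eta> * (2 * Bd + 1))"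
        proof (rule sum_mono)
          fix k assume "k \<in> {..<n}"
          hence k: "k < n" by simp
          show "\<bar>gs k x * gs k x' - \<phi> k x * \<phi> k x'\<bar> \<le> \<eta> * (2 * Bd + 1)"
          proof (rule prod_err)
            show "\<bar>gs k x - \<phi> k x\<bar> \<le> \<eta>" using gs k x by (simp add: abs_minus_commute less_imp_le)
            show "\<bar>gs k x' - \<phi> k x'\<bar> \<le> \<eta>" using gs k x' by (simp add: abs_minus_commute less_imp_le)
          qed (use \<phi>B k x x' \<eta>1 in auto)
        qed
        also have "\<dots> = real n * (\<eta> * (2 * Bd + 1))" by simp
        also have "\<dots> \<le> \<epsilon> / 8" by (rule \<eta>n)
        finally have d1: "\<bar>D1\<bar> \<le> \<epsilon> / 8" .
        have d2: "\<bar>H x - gu x\<bar> < \<epsilon> / 8" using gu(2) x \<eta>8 by fastforce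
        have d3: "\<bar>H x' - gu x'\<bar> < \<epsilon> / 8" using gu(2) x' \<eta>8 by fastforce
        have "gstar (fstar x) (fstar x') - ((\<Sum>k<n. gs k x * gs k x') + gu x + gu x')
            = E0 - D1 + (H x - gu x) + (H x' - gu x')"
          by (simp add: E0_def D1_def sum_subtractf)
        then show ?thesis using e0 d1 d2 d3 ep by linarith
      qed
      show "\<exists>(A::nat \<Rightarrow> nat \<Rightarrow> real) (B::nat \<Rightarrow> real^'p) (c::nat \<Rightarrow> real)
            (e::nat \<Rightarrow> real) (F::nat \<Rightarrow> real^'p) (ob::nat \<Rightarrow> real).
             \<forall>x\<in>cube M. \<forall>x'\<in>cube M.
               \<bar>gstar (fstar x) (fstar x')
                 - ((\<Sum>k<K. fpsi \<sigma> T A B c x k * fpsi \<sigma> T A B c x' k)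
                    + uxi \<sigma> T' e F ob x + uxi \<sigma> T' e F ob x')\<bar> < \<epsilon>"
        by (intro exI[of _ A] exI[of _ B] exI[of _ c] exI[of _ "Au 0"] exI[of _ Bu] exI[of _ cu] ballI)
           (simp add: sumeq ux bound[unfolded S_def])
    qed
  qed
  then show ?thesis by blast
qed

end
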